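(* Let $p$ be a prime, let $k,n\in\mathbb{N}$, $s\in[n]$, $t\in[p]$, and $\alpha\in(0,1)$. Let $$\boldsymbol{B}^\alpha_{k,s,\geq t}(n) := \left\{\boldsymbol{v}\in(\mathbb{F}_p+i\mathbb{F}_p)^n : R^\alpha_k(\boldsymbol{v}_I)\geq t\cdot\frac{2^{2k}|I|^{2k}}{p} \text{ for every } I\subseteq[n] \text{ with } |I|\geq s\right\}.$$ Then $$|\boldsymbol{B}^\alpha_{k,s,\geq t}(n)| \leq (\alpha t)^{s-n}p^{n+s}.$$
   Context: $\mathbb{F}_p+i\mathbb{F}_p$ denotes the additive group $\mathbb{F}_p^2$, with elements written $a+ib$ ($a,b\in\mathbb{F}_p$) and componentwise addition. $[n]=\{1,\dots,n\}$. For $I\subseteq[n]$ and $\boldsymbol{v}\in(\mathbb{F}_p+i\mathbb{F}_p)^n$, $\boldsymbol{v}_I$ is the vector $(v_i)_{i\in I}$. For a vector $\boldsymbol{w}=(w_i)_{i\in I}$ indexed by a finite set $I$, $k\in\mathbb{N}$ and $\alpha\in[-1,1]$, $R^\alpha_k(\boldsymbol{w})$ is the number of pairs consisting of a sequence $(i_1,\dots,i_{2k})\in I^{2k}$ and a sign pattern $(\epsilon_1,\dots,\epsilon_{2k})\in\{\pm1\}^{2k}$ such that $\epsilon_1w_{i_1}+\dots+\epsilon_{2k}w_{i_{2k}}=0$ and $|\{i_1,\dots,i_{2k}\}|\geq(1+\alpha)k$. *)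

theory Defs
  imports Complex_Main "HOL-Library.FuncSet" "HOL-Computational_Algebra.Primes"
begin

text \<open>The additive group F_p + i F_p, elements a+ib represented as pairs (a,b)
  of residues in {0..p-1}; addition is componentwise modulo p.\<close>
definition Fpi :: "nat \<Rightarrow> (int \<times> int) set" where
  "Fpi p = {0..<int p} \<times> {0..<int p}"

definition Rcount :: "nat \<Rightarrow> real \<Rightarrow> nat \<Rightarrow> 'a set \<Rightarrow> ('a \<Rightarrow> int \<times> int) \<Rightarrow> nat" where
  "Rcount p \<alpha> k I w = card {(ii, \<epsilon>).
      ii \<in> {0..<2*k} \<rightarrow>\<^sub>E I \<and> \<epsilon> \<in> {0..<2*k} \<rightarrow>\<^sub>E {-1, 1::int} \<and>
      (\<Sum>j<2*k. \<epsilon> j * fst (w (ii j))) mod int p = 0 \<and>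
      (\<Sum>j<2*k. \<epsilon> j * snd (w (ii j))) mod int p = 0 \<and>
      real (card (ii ` {0..<2*k})) \<ge> (1 + \<alpha>) * real k}"

definition Bset :: "nat \<Rightarrow> real \<Rightarrow> nat \<Rightarrow> nat \<Rightarrow> nat \<Rightarrow> nat \<Rightarrow> (nat \<Rightarrow> int \<times> int) set" where
  "Bset p \<alpha> k s t n = {v \<in> {1..n} \<rightarrow>\<^sub>E Fpi p.
      \<forall>I. I \<subseteq> {1..n} \<and> card I \<ge> s \<longrightarrow>
        real (Rcount p \<alpha> k I v) \<ge> real t * 2^(2*k) * real (card I)^(2*k) / real p}"

end

theory Submission imports Defs begin

definition Rset :: "nat \<Rightarrow> real \<Rightarrow> nat \<Rightarrow> 'a set \<Rightarrow> ('a \<Rightarrow> int \<times> int) \<Rightarrow> ((nat \<Rightarrow> 'a) \<times> (nat \<Rightarrow> int)) set" where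
  "Rset p \<alpha> k I w = {(ii, \<epsilon>).
      ii \<in> {0..<2*k} \<rightarrow>\<^sub>E I \<and> \<epsilon> \<in> {0..<2*k} \<rightarrow>\<^sub>E {-1, 1::int} \<and>
      (\<Sum>j<2*k. \<epsilon> j * fst (w (ii j))) mod int p = 0 \<and>
      (\<Sum>j<2*k. \<epsilon> j * snd (w (ii j))) mod int p = 0 \<and>
      real (card (ii ` {0..<2*k})) \<ge> (1 + \<alpha>) * real k}"

lemma Rcount_Rset: "Rcount p \<alpha> k I w = card (Rset p \<alpha> k I w)"
  by (simp add: Rcount_def Rset_def)

lemma Rset_sub: "Rset p \<alpha> k I w \<subseteq> ({0..<2*k} \<rightarrow>\<^sub>E I) \<times> ({0..<2*k} \<rightarrow>\<^sub>E {-1, 1::int})"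
  by (auto simp: Rset_def)

lemma finite_Rset: "finite I \<Longrightarrow> finite (Rset p \<alpha> k I w)"
  by (rule finite_subset[OF Rset_sub]) (auto intro!: finite_PiE)

lemma Rset_local:
  assumes "\<And>x. x \<in> J \<Longrightarrow> w x = w' x"
  shows "Rset p \<alpha> k J w = Rset p \<alpha> k J w'"
proof -
  have *: "(\<Sum>j<2*k. \<epsilon> j * f (w (ii j))) = (\<Sum>j<2*k. \<epsilon> j * f (w' (ii j)))"
    if "ii \<in> {0..<2*k} \<rightarrow>\<^sub>E J" for ii and \<epsilon> :: "nat \<Rightarrow> int" and f :: "int \<times> int \<Rightarrow> int"
    using that assms by (intro sum.cong) (auto simp: PiE_iff)
  show ?thesis unfolding Rset_def
    by (auto simp: *)
qed

lemma Rcount_local: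
  assumes "\<And>x. x \<in> J \<Longrightarrow> w x = w' x"
  shows "Rcount p \<alpha> k J w = Rcount p \<alpha> k J w'"
  unfolding Rcount_Rset using Rset_local[of J w w' p \<alpha> k] assms by simp

definition single :: "nat \<Rightarrow> (nat \<Rightarrow> 'a) \<Rightarrow> 'a \<Rightarrow> bool" where
  "single k ii i \<longleftrightarrow> card {j\<in>{0..<2*k}. ii j = i} = 1"

lemma singles_bound:
  fixes \<alpha> :: real
  assumes ii: "ii \<in> {0..<2*k} \<rightarrow>\<^sub>E I" and d: "real (card (ii ` {0..<2*k})) \<ge> (1 + \<alpha>) * real k"
  shows "real (card {i\<in>I. single k ii i}) \<ge> 2 * \<alpha> * real k"
proof -
  define D where "D = ii ` {0..<2*k}"
  define f where "f d = card {j\<in>{0..<2*k}. ii j = d}" for d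
  have fD: "finite D" by (simp add: D_def)
  have U: "{i\<in>I. single k ii i} = {d\<in>D. single k ii d}"
  proof -
    have "i \<in> D" if "single k ii i" for i
    proof -
      have "card {j\<in>{0..<2*k}. ii j = i} = 1" using that unfolding single_def .
      then obtain j0 where "{j\<in>{0..<2*k}. ii j = i} = {j0}" by (rule card_1_singletonE)
      then have "j0 \<in> {0..<2*k}" "ii j0 = i" by blast+
      then show "i \<in> D" unfolding D_def by blast
    qed
    moreover have "D \<subseteq> I" using ii by (auto simp: D_def PiE_iff)
    ultimately show ?thesis by auto
  qed
  have eqU: "{0..<2*k} = (\<Union>d\<in>D. {j\<in>{0..<2*k}. ii j = d})" by (auto simp: D_def)
  have cu: "card (\<Union>d\<in>D. {j\<in>{0..<2*k}. ii j = d}) = (\<Sum>d\<in>D. f d)"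
    unfolding f_def by (rule card_UN_disjoint) (use fD in auto)
  have "card {0..<2*k} = (\<Sum>d\<in>D. f d)" using arg_cong[OF eqU, of card] cu by (rule trans)
  then have sumf: "2*k = (\<Sum>d\<in>D. f d)" by simp
  have pw: "f d + (if single k ii d then 1 else 0) \<ge> (2::nat)" if "d \<in> D" for d
  proof -
    have "f d \<noteq> 0" using that unfolding f_def D_def by auto
    then show ?thesis unfolding single_def f_def[symmetric] by auto
  qed
  have "(\<Sum>d\<in>D. (2::nat)) \<le> (\<Sum>d\<in>D. f d + (if single k ii d then 1 else 0))"
    using pw by (rule sum_mono)
  also have "\<dots> = 2*k + card {d\<in>D. single k ii d}"
    using fD by (simp add: sum.distrib sumf sum.If_cases Int_def)
  finally have "2 * card D \<le> 2*k + card {i\<in>I. single k ii i}" using U by simp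
  then have "2 * real (card D) \<le> 2 * real k + real (card {i\<in>I. single k ii i})" by linarith
  then show ?thesis using d D_def by (simp add: algebra_simps)
qed

lemma card_swap:
  assumes "finite X" "finite Y"
  shows "(\<Sum>x\<in>X. card {y\<in>Y. Q x y}) = (\<Sum>y\<in>Y. card {x\<in>X. Q x y})"
proof -
  have h1: "card {y\<in>Y. Q x y} = (\<Sum>y\<in>Y. if Q x y then 1 else 0)" for x
    using assms(2) by (simp only: card_eq_sum sum.inter_filter)
  have h2: "card {x\<in>X. Q x y} = (\<Sum>x\<in>X. if Q x y then 1 else 0)" for y
    using assms(1) by (simp only: card_eq_sum sum.inter_filter)
  have "(\<Sum>x\<in>X. card {y\<in>Y. Q x y}) = (\<Sum>x\<in>X. \<Sum>y\<in>Y. if Q x y then 1 else 0)"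
    by (simp only: h1)
  also have "\<dots> = (\<Sum>y\<in>Y. \<Sum>x\<in>X. if Q x y then 1 else 0)" by (rule sum.swap)
  also have "\<dots> = (\<Sum>y\<in>Y. card {x\<in>X. Q x y})"
    by (simp only: h2)
  finally show ?thesis .
qed

definition Cnt :: "nat \<Rightarrow> real \<Rightarrow> nat \<Rightarrow> 'a \<Rightarrow> 'a set \<Rightarrow> ('a \<Rightarrow> int \<times> int) \<Rightarrow> nat" where
  "Cnt p \<alpha> k i I w = card {z \<in> Rset p \<alpha> k I w. single k (fst z) i}"

lemma Cnt_sum_lower:
  assumes "finite I"
  shows "2 * \<alpha> * real k * real (Rcount p \<alpha> k I w) \<le> (\<Sum>i\<in>I. real (Cnt p \<alpha> k i I w))"
proof -
  let ?R = "Rset p \<alpha> k I w"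
  have fR: "finite ?R" using finite_Rset[OF assms] .
  have "(\<Sum>i\<in>I. Cnt p \<alpha> k i I w) = (\<Sum>z\<in>?R. card {i\<in>I. single k (fst z) i})"
    unfolding Cnt_def by (rule card_swap[OF assms fR])
  then have eq: "(\<Sum>i\<in>I. real (Cnt p \<alpha> k i I w)) = (\<Sum>z\<in>?R. real (card {i\<in>I. single k (fst z) i}))"
    by (metis (no_types, lifting) of_nat_sum sum.cong)
  have "(\<Sum>z\<in>?R. 2 * \<alpha> * real k) \<le> (\<Sum>z\<in>?R. real (card {i\<in>I. single k (fst z) i}))"
  proof (rule sum_mono)
    fix z assume "z \<in> ?R"
    then show "2 * \<alpha> * real k \<le> real (card {i\<in>I. single k (fst z) i})"
      by (intro singles_bound[of _ k I]) (auto simp: Rset_def)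
  qed
  then show ?thesis using eq by (simp add: Rcount_Rset algebra_simps)
qed

lemma mod_unique:
  fixes a b c r :: int
  assumes "a \<in> {0..<int p}" "b \<in> {0..<int p}" "c \<in> {-1, 1}"
    "(c * a + r) mod int p = 0" "(c * b + r) mod int p = 0"
  shows "a = b"
proof -
  have "int p dvd (c * a + r)" "int p dvd (c * b + r)" using assms(4,5) by (simp_all add: dvd_eq_mod_eq_0)
  then have "int p dvd (c * a + r) - (c * b + r)" by (rule dvd_diff)
  then have "int p dvd c * (a - b)" by (simp add: algebra_simps)
  then have d: "int p dvd (a - b)" using assms(3) by (auto simp: dvd_diff_commute)
  show ?thesis
  proof (rule ccontr)
    assume "a \<noteq> b"
    then have "a - b \<noteq> 0" by simp
    then have "\<bar>int p\<bar> \<le> \<bar>a - b\<bar>" using dvd_imp_le_int d by blast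
    then show False using assms(1,2) by auto
  qed
qed

lemma card_fix_one:
  assumes "j < 2*k" "i \<in> I" "finite I"
  shows "card {ii \<in> {0..<2*k} \<rightarrow>\<^sub>E I. ii j = i} = card I ^ (2*k - 1)"
proof -
  have "{ii \<in> {0..<2*k} \<rightarrow>\<^sub>E I. ii j = i} = (\<Pi>\<^sub>E a\<in>{0..<2*k}. if a = j then {i} else I)"
    using assms by (auto simp: PiE_iff extensional_def split: if_splits)
  then have "card {ii \<in> {0..<2*k} \<rightarrow>\<^sub>E I. ii j = i} = (\<Prod>a\<in>{0..<2*k}. card (if a = j then {i} else I))"
    by (simp add: card_PiE)
  also have "\<dots> = (\<Prod>a\<in>{0..<2*k} - {j}. card I)"
    using assms by (subst prod.remove[of _ j]) (auto intro!: prod.cong)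
  also have "\<dots> = card I ^ (2*k - 1)" using assms by simp
  finally show ?thesis .
qed

lemma unique_x:
  fixes u :: "'a \<Rightarrow> int \<times> int" and \<epsilon> :: "nat \<Rightarrow> int"
  assumes ii: "ii \<in> {0..<2*k} \<rightarrow>\<^sub>E I" and eps: "\<epsilon> \<in> {0..<2*k} \<rightarrow>\<^sub>E {-1, 1::int}"
    and sg: "single k ii i"
    and x: "x \<in> Fpi p" and y: "y \<in> Fpi p"
    and zx1: "(\<Sum>j<2*k. \<epsilon> j * fst ((u(i:=x)) (ii j))) mod int p = 0"
    and zx2: "(\<Sum>j<2*k. \<epsilon> j * snd ((u(i:=x)) (ii j))) mod int p = 0"
    and zy1: "(\<Sum>j<2*k. \<epsilon> j * fst ((u(i:=y)) (ii j))) mod int p = 0"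
    and zy2: "(\<Sum>j<2*k. \<epsilon> j * snd ((u(i:=y)) (ii j))) mod int p = 0"
  shows "x = y"
proof -
  obtain j0 where j0: "{j\<in>{0..<2*k}. ii j = i} = {j0}"
    using sg unfolding single_def by (rule card_1_singletonE)
  have j0lt: "j0 < 2*k" and iij0: "ii j0 = i" using j0 by auto
  have other: "ii j \<noteq> i" if "j < 2*k" "j \<noteq> j0" for j
    using j0 that by auto
  have split: "(\<Sum>j<2*k. \<epsilon> j * h ((u(i:=z)) (ii j))) =
     \<epsilon> j0 * h z + (\<Sum>j\<in>{..<2*k} - {j0}. \<epsilon> j * h (u (ii j)))" for h :: "int \<times> int \<Rightarrow> int" and z
  proof -
    have "(\<Sum>j<2*k. \<epsilon> j * h ((u(i:=z)) (ii j))) =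
       \<epsilon> j0 * h ((u(i:=z)) (ii j0)) + (\<Sum>j\<in>{..<2*k} - {j0}. \<epsilon> j * h ((u(i:=z)) (ii j)))"
      using j0lt by (subst sum.remove[of _ j0]) auto
    also have "(\<Sum>j\<in>{..<2*k} - {j0}. \<epsilon> j * h ((u(i:=z)) (ii j))) = (\<Sum>j\<in>{..<2*k} - {j0}. \<epsilon> j * h (u (ii j)))"
      by (intro sum.cong) (auto dest: other)
    finally show ?thesis using iij0 by simp
  qed
  have e: "\<epsilon> j0 \<in> {-1, 1}" using eps j0lt by (auto simp: PiE_iff)
  have A1: "(\<epsilon> j0 * fst x + (\<Sum>j\<in>{..<2*k} - {j0}. \<epsilon> j * fst (u (ii j)))) mod int p = 0"
    using zx1 split[of fst x] by simp
  have B1: "(\<epsilon> j0 * fst y + (\<Sum>j\<in>{..<2*k} - {j0}. \<epsilon> j * fst (u (ii j)))) mod int p = 0"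
    using zy1 split[of fst y] by simp
  have A2: "(\<epsilon> j0 * snd x + (\<Sum>j\<in>{..<2*k} - {j0}. \<epsilon> j * snd (u (ii j)))) mod int p = 0"
    using zx2 split[of snd x] by simp
  have B2: "(\<epsilon> j0 * snd y + (\<Sum>j\<in>{..<2*k} - {j0}. \<epsilon> j * snd (u (ii j)))) mod int p = 0"
    using zy2 split[of snd y] by simp
  have fx: "fst x \<in> {0..<int p}" "snd x \<in> {0..<int p}" using x by (auto simp: Fpi_def)
  have fy: "fst y \<in> {0..<int p}" "snd y \<in> {0..<int p}" using y by (auto simp: Fpi_def)
  have "fst x = fst y" by (rule mod_unique[OF fx(1) fy(1) e A1 B1])
  moreover have "snd x = snd y" by (rule mod_unique[OF fx(2) fy(2) e A2 B2])
  ultimately show ?thesis by (simp add: prod_eq_iff)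
qed

lemma finite_Fpi: "finite (Fpi p)" by (simp add: Fpi_def)

lemma card_Fpi: "card (Fpi p) = p * p" by (simp add: Fpi_def card_cartesian_product)

lemma Cnt_sum_upper:
  assumes fI: "finite I" and iI: "i \<in> I"
  shows "(\<Sum>x\<in>Fpi p. real (Cnt p \<alpha> k i I (u(i:=x)))) \<le> real (2*k * card I^(2*k-1) * 2^(2*k))"
proof -
  define Pii where "Pii = {0..<2*k} \<rightarrow>\<^sub>E I"
  define Ps where "Ps = {0..<2*k} \<rightarrow>\<^sub>E {-1, 1::int}"
  define E where "E = {z \<in> Pii \<times> Ps. single k (fst z) i}"
  define Z where "Z x z \<longleftrightarrow> (\<Sum>j<2*k. snd z j * fst ((u(i:=x)) (fst z j))) mod int p = 0 \<and>
      (\<Sum>j<2*k. snd z j * snd ((u(i:=x)) (fst z j))) mod int p = 0" for x z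
  have fPP: "finite Pii" "finite Ps" unfolding Pii_def Ps_def using fI by (auto intro!: finite_PiE)
  have fE: "finite E"
  proof -
    have "E \<subseteq> Pii \<times> Ps" unfolding E_def by auto
    then show ?thesis using fPP by (meson finite_SigmaI finite_subset)
  qed
  have c1: "Cnt p \<alpha> k i I (u(i:=x)) \<le> card {z\<in>E. Z x z}" for x
    unfolding Cnt_def
  proof (rule card_mono)
    show "finite {z\<in>E. Z x z}" using fE by simp
    show "{z \<in> Rset p \<alpha> k I (u(i := x)). single k (fst z) i} \<subseteq> {z\<in>E. Z x z}"
      by (intro subsetI) (clarsimp simp: Rset_def E_def Z_def Pii_def Ps_def simp del: fun_upd_apply)
  qed
  have cardA: "card {ii\<in>Pii. \<exists>j\<in>{0..<2*k}. ii j = i} \<le> 2*k * card I^(2*k-1)"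
  proof -
    have "{ii\<in>Pii. \<exists>j\<in>{0..<2*k}. ii j = i} = (\<Union>j\<in>{0..<2*k}. {ii\<in>Pii. ii j = i})" by auto
    then have "card {ii\<in>Pii. \<exists>j\<in>{0..<2*k}. ii j = i} \<le> (\<Sum>j\<in>{0..<2*k}. card {ii\<in>Pii. ii j = i})"
      using card_UN_le[of "{0..<2*k}" "\<lambda>j. {ii\<in>Pii. ii j = i}"] by simp
    also have "\<dots> = (\<Sum>j\<in>{0..<2*k}. card I^(2*k-1))"
      unfolding Pii_def by (intro sum.cong refl card_fix_one) (use fI iI in auto)
    finally show ?thesis by simp
  qed
  have "(\<Sum>x\<in>Fpi p. Cnt p \<alpha> k i I (u(i:=x))) \<le> (\<Sum>x\<in>Fpi p. card {z\<in>E. Z x z})"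
    by (rule sum_mono) (rule c1)
  also have "\<dots> = (\<Sum>z\<in>E. card {x\<in>Fpi p. Z x z})"
    by (rule card_swap[OF finite_Fpi fE])
  also have "\<dots> \<le> (\<Sum>z\<in>E. 1)"
  proof (rule sum_mono)
    fix z assume zE: "z \<in> E"
    obtain ii \<epsilon> where z: "z = (ii, \<epsilon>)" by fastforce
    have zz: "ii \<in> {0..<2*k} \<rightarrow>\<^sub>E I" "\<epsilon> \<in> {0..<2*k} \<rightarrow>\<^sub>E {-1, 1::int}" "single k ii i"
      using zE unfolding z E_def Pii_def Ps_def by auto
    have "\<forall>a1\<in>{x\<in>Fpi p. Z x z}. \<forall>a2\<in>{x\<in>Fpi p. Z x z}. a1 = a2"
    proof (intro ballI)
      fix a1 a2 assume a1: "a1 \<in> {x\<in>Fpi p. Z x z}" and a2: "a2 \<in> {x\<in>Fpi p. Z x z}"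
      have m1: "a1 \<in> Fpi p" "(\<Sum>j<2*k. \<epsilon> j * fst ((u(i:=a1)) (ii j))) mod int p = 0"
        "(\<Sum>j<2*k. \<epsilon> j * snd ((u(i:=a1)) (ii j))) mod int p = 0"
        using a1 unfolding Z_def z by (simp_all del: fun_upd_apply)
      have m2: "a2 \<in> Fpi p" "(\<Sum>j<2*k. \<epsilon> j * fst ((u(i:=a2)) (ii j))) mod int p = 0"
        "(\<Sum>j<2*k. \<epsilon> j * snd ((u(i:=a2)) (ii j))) mod int p = 0"
        using a2 unfolding Z_def z by (simp_all del: fun_upd_apply)
      show "a1 = a2" by (rule unique_x[OF zz m1(1) m2(1) m1(2) m1(3) m2(2) m2(3)])
    qed
    then show "card {x\<in>Fpi p. Z x z} \<le> 1"
      using card_le_Suc0_iff_eq[of "{x\<in>Fpi p. Z x z}"] finite_Fpi by auto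
  qed
  also have "\<dots> = card E" by simp
  also have "card E \<le> card ({ii\<in>Pii. \<exists>j\<in>{0..<2*k}. ii j = i} \<times> Ps)"
  proof (rule card_mono)
    show "finite ({ii\<in>Pii. \<exists>j\<in>{0..<2*k}. ii j = i} \<times> Ps)"
      using fPP by simp
    show "E \<subseteq> {ii\<in>Pii. \<exists>j\<in>{0..<2*k}. ii j = i} \<times> Ps"
    proof
      fix z assume "z \<in> E"
      then have "card {j\<in>{0..<2*k}. fst z j = i} = 1" "fst z \<in> Pii" "snd z \<in> Ps"
        unfolding E_def single_def by auto
      obtain j0 where "{j\<in>{0..<2*k}. fst z j = i} = {j0}"
        using \<open>card {j\<in>{0..<2*k}. fst z j = i} = 1\<close> by (rule card_1_singletonE)
      then have "\<exists>j\<in>{0..<2*k}. fst z j = i" by blast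
      then show "z \<in> {ii\<in>Pii. \<exists>j\<in>{0..<2*k}. ii j = i} \<times> Ps"
        unfolding mem_Times_iff using \<open>fst z \<in> Pii\<close> \<open>snd z \<in> Ps\<close> by blast
    qed
  qed
  also have "\<dots> = card {ii\<in>Pii. \<exists>j\<in>{0..<2*k}. ii j = i} * 2^(2*k)"
  proof -
    have c2: "card {-1, 1::int} = 2" by simp
    have "card Ps = 2^(2*k)" unfolding Ps_def by (simp only: card_PiE finite_atLeastLessThan c2 prod_constant card_atLeastLessThan diff_zero)
    then show ?thesis by (simp only: card_cartesian_product)
  qed
  also have "\<dots> \<le> 2*k * card I^(2*k-1) * 2^(2*k)"
    using cardA by simp
  finally have "(\<Sum>x\<in>Fpi p. Cnt p \<alpha> k i I (u(i:=x))) \<le> 2*k * card I^(2*k-1) * 2^(2*k)" .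
  then show ?thesis by (simp only: of_nat_sum[symmetric] of_nat_le_iff)
qed

definition Good :: "nat \<Rightarrow> real \<Rightarrow> nat \<Rightarrow> nat \<Rightarrow> nat \<Rightarrow> nat set \<Rightarrow> (nat \<Rightarrow> int \<times> int) set" where
  "Good p \<alpha> k s t I = {v \<in> I \<rightarrow>\<^sub>E Fpi p.
      \<forall>J. J \<subseteq> I \<and> card J \<ge> s \<longrightarrow>
        real (Rcount p \<alpha> k J v) \<ge> real t * 2^(2*k) * real (card J)^(2*k) / real p}"

lemma Bset_Good: "Bset p \<alpha> k s t n = Good p \<alpha> k s t {1..n}"
  unfolding Bset_def Good_def by (rule refl)

lemma Good_PiE: "w \<in> Good p \<alpha> k s t I \<Longrightarrow> w \<in> I \<rightarrow>\<^sub>E Fpi p"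
  unfolding Good_def mem_Collect_eq by (rule conjunct1)

lemma Good_cond:
  assumes "w \<in> Good p \<alpha> k s t I" "J \<subseteq> I" "card J \<ge> s"
  shows "real (Rcount p \<alpha> k J w) \<ge> real t * 2^(2*k) * real (card J)^(2*k) / real p"
proof -
  have "\<forall>J. J \<subseteq> I \<and> card J \<ge> s \<longrightarrow>
        real (Rcount p \<alpha> k J w) \<ge> real t * 2^(2*k) * real (card J)^(2*k) / real p"
    using assms(1) unfolding Good_def mem_Collect_eq by (rule conjunct2)
  then show ?thesis using assms(2,3) by blast
qed

lemma finite_Good: "finite I \<Longrightarrow> finite (Good p \<alpha> k s t I)"
proof (rule finite_subset)
  show "Good p \<alpha> k s t I \<subseteq> I \<rightarrow>\<^sub>E Fpi p" using Good_PiE by blast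
  assume "finite I"
  then show "finite (I \<rightarrow>\<^sub>E Fpi p)" using finite_Fpi by (rule finite_PiE)
qed

lemma Good_restrict:
  assumes w: "w \<in> Good p \<alpha> k s t I"
  shows "restrict w (I - {i}) \<in> Good p \<alpha> k s t (I - {i})"
proof -
  have wP: "w \<in> I \<rightarrow>\<^sub>E Fpi p" using w by (rule Good_PiE)
  have A: "restrict w (I - {i}) \<in> (I - {i}) \<rightarrow>\<^sub>E Fpi p" using wP by (auto simp: PiE_iff)
  have B: "real (Rcount p \<alpha> k J (restrict w (I - {i}))) \<ge> real t * 2^(2*k) * real (card J)^(2*k) / real p"
    if "J \<subseteq> I - {i}" "card J \<ge> s" for J
  proof -
    have "Rcount p \<alpha> k J (restrict w (I - {i})) = Rcount p \<alpha> k J w"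
      proof (rule Rcount_local)
      fix x assume "x \<in> J"
      then have "x \<in> I - {i}" using that(1) by blast
      then show "restrict w (I - {i}) x = w x" by simp
    qed
    moreover have "J \<subseteq> I" using that by auto
    ultimately show ?thesis using Good_cond[OF w _ that(2)] by metis
  qed
  show ?thesis unfolding Good_def mem_Collect_eq
  proof (intro conjI allI impI)
    show "restrict w (I - {i}) \<in> (I - {i}) \<rightarrow>\<^sub>E Fpi p" by (rule A)
    fix J assume "J \<subseteq> I - {i} \<and> s \<le> card J"
    then show "real t * 2^(2*k) * real (card J)^(2*k) / real p \<le> real (Rcount p \<alpha> k J (restrict w (I - {i})))"
      using B by blast
  qed
qed

lemma Good_step:
  fixes M :: real
  assumes p: "p > 0" and a: "\<alpha> > 0" and k: "k \<ge> 1" and t: "t \<ge> 1"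
    and fI: "finite I" and sI: "card I \<ge> s" and NI: "card I \<ge> 1"
    and IH: "\<And>i. i \<in> I \<Longrightarrow> real (card (Good p \<alpha> k s t (I - {i}))) \<le> M"
  shows "real (card (Good p \<alpha> k s t I)) \<le> M * real p / (\<alpha> * real t)"
proof -
  define N where "N = card I"
  define G where "G = Good p \<alpha> k s t I"
  define K :: real where "K = real (2*k * N^(2*k-1) * 2^(2*k))"
  define C :: real where "C = 2 * \<alpha> * real k * (real t * 2^(2*k) * real N^(2*k) / real p)"
  have fG: "finite G" unfolding G_def using fI by (rule finite_Good)
  have lower: "C \<le> (\<Sum>i\<in>I. real (Cnt p \<alpha> k i I w))" if "w \<in> G" for w
  proof -
    have Rb: "real (Rcount p \<alpha> k I w) \<ge> real t * 2^(2*k) * real N^(2*k) / real p"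
      using Good_cond[OF that[unfolded G_def] order_refl sI] unfolding N_def .
    have "C \<le> 2 * \<alpha> * real k * real (Rcount p \<alpha> k I w)"
      unfolding C_def by (rule mult_left_mono[OF Rb]) (use a in simp)
    also have "\<dots> \<le> (\<Sum>i\<in>I. real (Cnt p \<alpha> k i I w))" by (rule Cnt_sum_lower[OF fI])
    finally show ?thesis .
  qed
  have per_i: "(\<Sum>w\<in>G. real (Cnt p \<alpha> k i I w)) \<le> M * K" if iI: "i \<in> I" for i
  proof -
    define g where "g w = (restrict w (I - {i}), w i)" for w :: "nat \<Rightarrow> int \<times> int"
    define h where "h y = real (Cnt p \<alpha> k i I ((fst y)(i := snd y)))" for y :: "(nat \<Rightarrow> int \<times> int) \<times> (int \<times> int)"
    have rec: "(restrict w (I - {i}))(i := w i) = w" if "w \<in> G" for w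
    proof
      fix x
      have "w \<in> I \<rightarrow>\<^sub>E Fpi p" using that unfolding G_def by (rule Good_PiE)
      then show "((restrict w (I - {i}))(i := w i)) x = w x"
        using iI by (cases "x = i") (auto simp: restrict_def PiE_def extensional_def)
    qed
    have inj: "inj_on g G"
    proof (rule inj_onI)
      fix w1 w2 assume w12: "w1 \<in> G" "w2 \<in> G" "g w1 = g w2"
      then have e1: "restrict w1 (I - {i}) = restrict w2 (I - {i})" and e2: "w1 i = w2 i"
        unfolding g_def prod.inject by blast+
      have "w1 = (restrict w1 (I - {i}))(i := w1 i)" using rec[OF w12(1)] by (rule sym)
      also have "\<dots> = (restrict w2 (I - {i}))(i := w2 i)" by (simp only: e1 e2)
      also have "\<dots> = w2" by (rule rec[OF w12(2)])
      finally show "w1 = w2" .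
    qed
    have "(\<Sum>w\<in>G. real (Cnt p \<alpha> k i I w)) = (\<Sum>w\<in>G. h (g w))"
    proof (intro sum.cong refl)
      fix w assume "w \<in> G"
      show "real (Cnt p \<alpha> k i I w) = h (g w)"
        unfolding h_def g_def fst_conv snd_conv rec[OF \<open>w \<in> G\<close>] ..
    qed
    also have "\<dots> = (\<Sum>y\<in>g ` G. h y)" by (simp add: sum.reindex[OF inj])
    also have "\<dots> \<le> (\<Sum>y\<in>Good p \<alpha> k s t (I - {i}) \<times> Fpi p. h y)"
    proof (rule sum_mono2)
      show "finite (Good p \<alpha> k s t (I - {i}) \<times> Fpi p)"
        using fI by (simp add: finite_Good finite_Fpi)
      show "g ` G \<subseteq> Good p \<alpha> k s t (I - {i}) \<times> Fpi p"
      proof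
        fix y assume "y \<in> g ` G"
        then obtain w where w: "w \<in> G" "y = g w" by auto
        have "w \<in> I \<rightarrow>\<^sub>E Fpi p" using w(1) unfolding G_def by (rule Good_PiE)
        then have "w i \<in> Fpi p" using iI by auto
        then show "y \<in> Good p \<alpha> k s t (I - {i}) \<times> Fpi p"
          unfolding w(2) g_def mem_Times_iff fst_conv snd_conv
          using Good_restrict[OF w(1)[unfolded G_def]] \<open>w i \<in> Fpi p\<close> by blast
      qed
      show "\<And>b. b \<in> Good p \<alpha> k s t (I - {i}) \<times> Fpi p - g ` G \<Longrightarrow> 0 \<le> h b"
        by (simp add: h_def)
    qed
    also have "\<dots> = (\<Sum>u\<in>Good p \<alpha> k s t (I - {i}). \<Sum>x\<in>Fpi p. h (u, x))"
      by (subst sum.cartesian_product) simp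
    also have "\<dots> \<le> (\<Sum>u\<in>Good p \<alpha> k s t (I - {i}). K)"
    proof (rule sum_mono)
      fix u
      show "(\<Sum>x\<in>Fpi p. h (u, x)) \<le> K"
        using Cnt_sum_upper[OF fI iI, of p \<alpha> k u] by (simp only: h_def K_def N_def fst_conv snd_conv)
    qed
    also have "\<dots> = real (card (Good p \<alpha> k s t (I - {i}))) * K" by simp
    also have "\<dots> \<le> M * K"
      using IH[OF iI] by (intro mult_right_mono) (auto simp: K_def)
    finally show ?thesis .
  qed
  have "real (card G) * C = (\<Sum>w\<in>G. C)" by simp
  also have "\<dots> \<le> (\<Sum>w\<in>G. \<Sum>i\<in>I. real (Cnt p \<alpha> k i I w))"
    by (rule sum_mono) (rule lower)
  also have "\<dots> = (\<Sum>i\<in>I. \<Sum>w\<in>G. real (Cnt p \<alpha> k i I w))" by (rule sum.swap)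
  also have "\<dots> \<le> (\<Sum>i\<in>I. M * K)" by (rule sum_mono) (rule per_i)
  also have "\<dots> = real N * (M * K)" by (simp add: N_def)
  finally have ineq: "real (card G) * C \<le> real N * (M * K)" .
  have NK: "real N * K = 2 * real k * 2^(2*k) * real N^(2*k)"
  proof -
    have e2: "2*k = Suc (2*k-1)" using k by simp
    have e: "N * N^(2*k-1) = N^(2*k)" by (subst e2) (simp only: power_Suc)
    have "N * (2*k * N^(2*k-1) * 2^(2*k)) = 2*k * 2^(2*k) * (N * N^(2*k-1))" by (simp only: ac_simps)
    also have "\<dots> = 2*k * 2^(2*k) * N^(2*k)" by (simp only: e)
    finally have "real N * K = real (2*k * 2^(2*k) * N^(2*k))" unfolding K_def by (simp only: of_nat_mult[symmetric])
    then show ?thesis by simp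
  qed
  define Q :: real where "Q = 2 * real k * 2^(2*k) * real N^(2*k)"
  have Q0: "Q > 0" unfolding Q_def using k NI N_def by auto
  have CQ: "C = Q * (\<alpha> * real t / real p)" unfolding C_def Q_def by (simp add: algebra_simps)
  have "(real (card G) * (\<alpha> * real t / real p)) * Q = real (card G) * C" by (simp only: CQ ac_simps)
  also have "\<dots> \<le> real N * (M * K)" by (rule ineq)
  also have "\<dots> = M * (real N * K)" by (simp only: ac_simps)
  also have "\<dots> = M * Q" by (simp only: NK Q_def)
  finally have "(real (card G) * (\<alpha> * real t / real p)) * Q \<le> M * Q" .
  then have "real (card G) * (\<alpha> * real t / real p) \<le> M" using Q0 by (rule mult_right_le_imp_le)
  then have "real (card G) * (\<alpha> * real t) \<le> M * real p" using p by (simp add: field_simps)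
  then show ?thesis unfolding G_def using a t p by (simp add: field_simps)
qed

lemma Good_bound:
  assumes p: "p > 0" and a: "\<alpha> > 0" and k: "k \<ge> 1" and t: "t \<ge> 1" and s1: "s \<ge> 1"
  shows "finite I \<Longrightarrow> card I = s + d \<Longrightarrow>
    real (card (Good p \<alpha> k s t I)) \<le> (real p / (\<alpha> * real t))^d * real p^(2*s)"
proof (induction d arbitrary: I)
  case 0
  have "card (Good p \<alpha> k s t I) \<le> card (I \<rightarrow>\<^sub>E Fpi p)"
  proof (rule card_mono)
    show "finite (I \<rightarrow>\<^sub>E Fpi p)" using 0(1) finite_Fpi by (rule finite_PiE)
    show "Good p \<alpha> k s t I \<subseteq> I \<rightarrow>\<^sub>E Fpi p" using Good_PiE by blast
  qed
  also have "card (I \<rightarrow>\<^sub>E Fpi p) = (p*p)^s" using 0 by (simp add: card_PiE card_Fpi)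
  finally have "real (card (Good p \<alpha> k s t I)) \<le> real ((p*p)^s)" by (simp only: of_nat_le_iff)
  also have "real ((p*p)^s) = real p^(2*s)" by (simp add: power_mult power2_eq_square)
  finally show ?case by simp
next
  case (Suc d)
  define M where "M = (real p / (\<alpha> * real t))^d * real p^(2*s)"
  have "real (card (Good p \<alpha> k s t I)) \<le> M * real p / (\<alpha> * real t)"
  proof (rule Good_step[OF p a k t Suc.prems(1)])
    show "s \<le> card I" using Suc.prems by simp
    show "1 \<le> card I" using Suc.prems by simp
    fix i assume "i \<in> I"
    then have "card (I - {i}) = s + d" using Suc.prems by simp
    then show "real (card (Good p \<alpha> k s t (I - {i}))) \<le> M"
      unfolding M_def using Suc.IH[of "I - {i}"] Suc.prems(1) by simp
  qed
  also have "M * real p / (\<alpha> * real t) = (real p / (\<alpha> * real t))^Suc d * real p^(2*s)"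
    unfolding M_def by (simp add: field_simps)
  finally show ?case .
qed

theorem theorem5p2:
  fixes p k n s t :: nat and \<alpha> :: real
  assumes "prime p" and "k \<ge> 1" and "1 \<le> s" and "s \<le> n" and "1 \<le> t" and "t \<le> p"
    and "0 < \<alpha>" and "\<alpha> < 1"
  shows "real (card (Bset p \<alpha> k s t n))
           \<le> (\<alpha> * real t) powr (real s - real n) * real p ^ (n + s)"
proof -
  have p: "p > 0" using assms(1) prime_gt_0_nat by blast
  have at: "\<alpha> * real t > 0" using assms by simp
  have "real (card (Bset p \<alpha> k s t n)) \<le> (real p / (\<alpha> * real t))^(n - s) * real p^(2*s)"
    unfolding Bset_Good
    by (rule Good_bound[OF p assms(7) assms(2) assms(5) assms(3)]) (use assms(4) in auto)
  also have "\<dots> = (\<alpha> * real t) powr (real s - real n) * real p ^ (n + s)"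
  proof -
    have "(\<alpha> * real t) powr (real s - real n) = inverse ((\<alpha> * real t) ^ (n - s))"
      using at assms(4) by (simp add: powr_minus[symmetric] powr_realpow[symmetric] of_nat_diff)
    moreover have "real p ^ (n + s) = real p^(n - s) * real p^(2*s)"
      using assms(4) by (simp flip: power_add add: add.commute)
    ultimately show ?thesis by (simp add: power_divide field_simps)
  qed
  finally show ?thesis .
qed

end
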